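(* Let $R\subset S$ be a distributive FCP ring extension. Then $\mathcal S[R,T]=\mathcal S[R,S]\cap T$ for each $T\in[R,S]$ with $T\neq R$.
   Context: All rings are commutative with identity. $[R,S]$ is the lattice of $R$-subalgebras of $S$ (meet = intersection, join = product). FCP: every chain in $[R,S]$ is finite. $T\subset U$ minimal means $[T,U]=\{T,U\}$; an atom of $[R,T]$ is $A$ with $R\subset A$ minimal and $A\subseteq T$; the socle $\mathcal S[R,T]$ is the product of all atoms of $[R,T]$. The extension is distributive if the lattice $[R,S]$ is distributive. *)

theory Defs
  imports Main
begin

text \<open>Rings are modelled as subrings (sets) of an ambient commutative ring type.\<close>

definition subring :: "'a::comm_ring_1 set \<Rightarrow> bool" where
  "subring A \<longleftrightarrow> 0 \<in> A \<and> 1 \<in> A \<and> (\<forall>x\<in>A. \<forall>y\<in>A. x + y \<in> A \<and> x * y \<in> A) \<and> (\<forall>x\<in>A. - x \<in> A)"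

definition interval :: "'a::comm_ring_1 set \<Rightarrow> 'a set \<Rightarrow> 'a set set" where
  "interval R S = {T. subring T \<and> R \<subseteq> T \<and> T \<subseteq> S}"

definition product :: "'a::comm_ring_1 set \<Rightarrow> 'a set set \<Rightarrow> 'a set" where
  "product R F = \<Inter>{U. subring U \<and> R \<subseteq> U \<and> \<Union>F \<subseteq> U}"

definition join :: "'a::comm_ring_1 set \<Rightarrow> 'a set \<Rightarrow> 'a set \<Rightarrow> 'a set" where
  "join R A B = product R {A, B}"

definition FCP :: "'a::comm_ring_1 set \<Rightarrow> 'a set \<Rightarrow> bool" where
  "FCP R S \<longleftrightarrow> (\<forall>C. C \<subseteq> interval R S \<and> (\<forall>A\<in>C. \<forall>B\<in>C. A \<subseteq> B \<or> B \<subseteq> A) \<longrightarrow> finite C)"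

definition minimal_ext :: "'a::comm_ring_1 set \<Rightarrow> 'a set \<Rightarrow> bool" where
  "minimal_ext T U \<longleftrightarrow> T \<subset> U \<and> interval T U = {T, U}"

definition atoms :: "'a::comm_ring_1 set \<Rightarrow> 'a set \<Rightarrow> 'a set set" where
  "atoms R T = {A. minimal_ext R A \<and> A \<subseteq> T}"

definition socle :: "'a::comm_ring_1 set \<Rightarrow> 'a set \<Rightarrow> 'a set" where
  "socle R T = product R (atoms R T)"

definition distributive_ext :: "'a::comm_ring_1 set \<Rightarrow> 'a set \<Rightarrow> bool" where
  "distributive_ext R S \<longleftrightarrow>
     (\<forall>A\<in>interval R S. \<forall>B\<in>interval R S. \<forall>C\<in>interval R S.
        A \<inter> join R B C = join R (A \<inter> B) (A \<inter> C))"

end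

theory Submission
  imports Defs
begin

lemma subring_Inter: "\<forall>U\<in>M. subring U \<Longrightarrow> subring (\<Inter>M)"
  unfolding subring_def by blast

lemma subring_Int: "subring A \<Longrightarrow> subring B \<Longrightarrow> subring (A \<inter> B)"
  using subring_Inter[of "{A,B}"] by simp

lemma product_subring: "subring (product R F)"
  unfolding product_def by (rule subring_Inter) blast

lemma product_ge1: "R \<subseteq> product R F"
  unfolding product_def by blast
lemma product_ge2: "\<Union>F \<subseteq> product R F"
  unfolding product_def by blast
lemmas product_ge = product_ge1 product_ge2

lemma product_le: "subring U \<Longrightarrow> R \<subseteq> U \<Longrightarrow> \<Union>F \<subseteq> U \<Longrightarrow> product R F \<subseteq> U"
  unfolding product_def by blast

lemma product_empty: "subring R \<Longrightarrow> product R {} = R"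
  using product_ge1[of R "{}"] product_le[of R R "{}"] by auto

lemma product_mono: "F \<subseteq> G \<Longrightarrow> product R F \<subseteq> product R G"
  by (rule product_le) (use product_subring product_ge in blast)+

lemma product_insert: "product R (insert a F) = join R a (product R F)"
  unfolding join_def
proof (rule antisym)
  show "product R (insert a F) \<subseteq> product R {a, product R F}"
    apply (rule product_le[OF product_subring product_ge1])
    using product_ge2[of "{a, product R F}" R] product_ge2[of F R] by auto
  show "product R {a, product R F} \<subseteq> product R (insert a F)"
    apply (rule product_le[OF product_subring product_ge1])
    using product_ge2[of "insert a F" R] product_mono[of F "insert a F" R] by auto
qed

lemma join_R: "subring P \<Longrightarrow> R \<subseteq> P \<Longrightarrow> join R R P = P"
  unfolding join_def
  using product_ge1[of R "{R,P}"] product_ge2[of "{R,P}" R] product_le[of P R "{R,P}"] by auto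

lemma atom_sub: "A \<in> atoms R S \<Longrightarrow> subring A \<and> R \<subset> A \<and> A \<subseteq> S \<and> subring R"
proof -
  assume a: "A \<in> atoms R S"
  then have e: "interval R A = {R, A}" and "R \<subset> A" "A \<subseteq> S" unfolding atoms_def minimal_ext_def by auto
  moreover have "A \<in> interval R A" "R \<in> interval R A" using e by auto
  ultimately show ?thesis unfolding interval_def by auto
qed

lemma atom_eq: "A \<in> atoms R S \<Longrightarrow> B \<in> atoms R S \<Longrightarrow> A \<subseteq> B \<Longrightarrow> A = B"
proof -
  assume a: "A \<in> atoms R S" and b: "B \<in> atoms R S" and s: "A \<subseteq> B"
  have "A \<in> interval R B" using atom_sub[OF a] s unfolding interval_def by auto
  also have "\<dots> = {R, B}" using b unfolding atoms_def minimal_ext_def by auto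
  finally show ?thesis using atom_sub[OF a] by auto
qed

lemma main:
  assumes "subring R" "subring S" "R \<subseteq> S" "distributive_ext R S"
    and "finite F" "F \<subseteq> atoms R S" "X \<in> interval R S"
  shows "X \<inter> product R F = product R {A\<in>F. A \<subseteq> X}"
  using assms(5,6)
proof (induction F rule: finite_induct)
  case empty
  then show ?case using assms(1,7) product_empty[of R] unfolding interval_def by auto
next
  case (insert a F)
  have Xi: "subring X" "R \<subseteq> X" "X \<subseteq> S" using assms(7) unfolding interval_def by auto
  have ai: "a \<in> atoms R S" using insert by auto
  note as = atom_sub[OF ai]
  have PF: "product R F \<in> interval R S"
  proof -
    have "\<Union>F \<subseteq> S" using insert(4) atom_sub by blast
    then show ?thesis unfolding interval_def
      using product_subring product_ge1 product_le[OF assms(2,3)] by blast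
  qed
  have aI: "a \<in> interval R S" using as unfolding interval_def by auto
  have "X \<inter> product R (insert a F) = X \<inter> join R a (product R F)" by (simp add: product_insert)
  also have "\<dots> = join R (X \<inter> a) (X \<inter> product R F)"
    using assms(4) assms(7) aI PF unfolding distributive_ext_def by simp
  also have "\<dots> = join R (X \<inter> a) (product R {A\<in>F. A \<subseteq> X})" using insert by auto
  also have "\<dots> = product R {A\<in>insert a F. A \<subseteq> X}"
  proof (cases "a \<subseteq> X")
    case True
    then have "X \<inter> a = a" by auto
    moreover have "{A\<in>insert a F. A \<subseteq> X} = insert a {A\<in>F. A \<subseteq> X}" using True by auto
    ultimately show ?thesis by (simp add: product_insert)
  next
    case False
    have "X \<inter> a \<in> interval R a" using subring_Int[OF Xi(1)] as Xi unfolding interval_def by auto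
    also have "\<dots> = {R, a}" using ai unfolding atoms_def minimal_ext_def by auto
    finally have "X \<inter> a = R" using False by auto
    moreover have "{A\<in>insert a F. A \<subseteq> X} = {A\<in>F. A \<subseteq> X}" using False by auto
    ultimately show ?thesis using join_R[OF product_subring product_ge1] by simp
  qed
  finally show ?case .
qed

lemma atoms_finite:
  assumes "subring R" "subring S" "R \<subseteq> S" "distributive_ext R S" "FCP R S"
  shows "finite (atoms R S)"
proof (rule ccontr)
  assume "infinite (atoms R S)"
  then obtain f :: "nat \<Rightarrow> 'a set" where f: "inj f" "range f \<subseteq> atoms R S"
    using infinite_countable_subset by blast
  define P where "P n = product R (f ` {..<n})" for n
  have US: "\<Union>(f ` N) \<subseteq> S" for N using f(2) atom_sub by blast
  have PI: "P n \<in> interval R S" for n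
    unfolding interval_def P_def
    using product_subring product_ge1 product_le[OF assms(2,3) US] by blast
  have step: "P n < P (Suc n)" for n
  proof -
    have le: "P n \<subseteq> P (Suc n)" unfolding P_def by (rule product_mono) auto
    have fin: "f n \<subseteq> P (Suc n)" unfolding P_def using product_ge2[of "f ` {..<Suc n}" R] by auto
    have fa: "f n \<in> atoms R S" using f by auto
    have emp: "{A\<in>f ` {..<n}. A \<subseteq> f n} = {}"
    proof (rule ccontr)
      assume "{A\<in>f ` {..<n}. A \<subseteq> f n} \<noteq> {}"
      then obtain i where "i < n" "f i \<subseteq> f n" by auto
      moreover have "f i \<in> atoms R S" using f(2) by auto
      ultimately have "f i = f n" using atom_eq[OF _ fa] by blast
      then show False using f(1) \<open>i < n\<close> by (auto dest: injD)
    qed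
    moreover have "f n \<in> interval R S" using atom_sub[OF fa] unfolding interval_def by auto
    moreover have "f ` {..<n} \<subseteq> atoms R S" using f(2) by auto
    ultimately have "f n \<inter> P n = R"
      using main[OF assms(1-4) _ , of "f ` {..<n}" "f n"] 
        product_empty[OF assms(1)] unfolding P_def emp by simp
    then have "\<not> f n \<subseteq> P n" using atom_sub[OF fa] by auto
    then show ?thesis using le fin by auto
  qed
  then have "strict_mono P" by (simp add: strict_mono_Suc_iff)
  then have "inj P" by (rule strict_mono_imp_inj_on)
  then have "infinite (range P)" using finite_imageD[of P UNIV] by auto
  moreover have "range P \<subseteq> interval R S" using PI by auto
  moreover have "\<forall>A\<in>range P. \<forall>B\<in>range P. A \<subseteq> B \<or> B \<subseteq> A"
  proof (intro ballI)
    fix A B assume "A \<in> range P" "B \<in> range P"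
    then obtain m n where "A = P m" "B = P n" by auto
    moreover have "m \<le> n \<Longrightarrow> P m \<subseteq> P n" "n \<le> m \<Longrightarrow> P n \<subseteq> P m"
      unfolding P_def by (simp_all add: product_mono image_mono)
    ultimately show "A \<subseteq> B \<or> B \<subseteq> A" using nat_le_linear[of m n] by blast
  qed
  ultimately show False using assms(5) unfolding FCP_def by blast
qed

theorem corollary8p21:
  fixes R S T :: "'a::comm_ring_1 set"
  assumes "subring R" and "subring S" and "R \<subset> S"
    and "FCP R S" and "distributive_ext R S"
    and "T \<in> interval R S" and "T \<noteq> R"
  shows "socle R T = socle R S \<inter> T"
proof -
  have RS: "R \<subseteq> S" using assms(3) by auto
  have "atoms R T = {A\<in>atoms R S. A \<subseteq> T}"
    using assms(6) unfolding atoms_def interval_def by auto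
  moreover have "T \<inter> product R (atoms R S) = product R {A\<in>atoms R S. A \<subseteq> T}"
    using main[OF assms(1,2) RS assms(5) atoms_finite[OF assms(1,2) RS assms(5,4)] _ assms(6)] by simp
  ultimately show ?thesis unfolding socle_def by auto
qed

end
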